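(* Let $\sigma=\sigma_1\cdots\sigma_k\in\mathfrak S_k$ be a consecutive pattern ($k\ge1$). Let $12\text{-}\sigma$ denote the generalized pattern $12\text{-}(\sigma_1+2)\cdots(\sigma_k+2)$ and $21\text{-}\sigma$ the generalized pattern $21\text{-}(\sigma_1+2)\cdots(\sigma_k+2)$. Then $A_{12\text{-}\sigma}(z)=A_{21\text{-}\sigma}(z)$.
   Context: $\mathfrak S_n$ is the symmetric group on $\{1,\dots,n\}$, permutations in one-line notation. A generalized pattern of length $m$ is a permutation $\sigma_1\cdots\sigma_m\in\mathfrak S_m$ with, between each pair of adjacent entries, either a dash "-" or nothing. A permutation $\pi\in\mathfrak S_n$ contains it if there are indices $i_1<\dots<i_m$ with $i_{j+1}=i_j+1$ whenever there is no dash between $\sigma_j$ and $\sigma_{j+1}$, and with $\pi_{i_a}<\pi_{i_b}$ iff $\sigma_a<\sigma_b$ for all $a,b$; otherwise $\pi$ avoids it. A consecutive pattern has no dashes. $\alpha_n(\sigma)$ is the number of permutations in $\mathfrak S_n$ avoiding $\sigma$ ($\alpha_0=1$) and $A_\sigma(z)=\sum_{n\ge0}\alpha_n(\sigma)z^n/n!$. *)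

theory Defs
  imports "HOL-Computational_Algebra.Formal_Power_Series"
begin

definition perms :: "nat \<Rightarrow> nat list set" where
  "perms n = {xs. distinct xs \<and> set xs = {1..n}}"

text \<open>A generalized pattern is a pair (sigma, D): sigma is a permutation of {1..m}
  in one-line notation and D is the set of (0-based) positions j < m-1 such that a
  dash stands between sigma!j and sigma!(j+1). No dash means the entries must be adjacent.\<close>
type_synonym gpattern = "nat list \<times> nat set"

definition contains :: "nat list \<Rightarrow> gpattern \<Rightarrow> bool" where
  "contains w p = (let sig = fst p; D = snd p; m = length sig in
     \<exists>idx :: nat \<Rightarrow> nat.
        (\<forall>j. j + 1 < m \<longrightarrow> idx j < idx (j + 1)) \<and>
        (\<forall>j<m. idx j < length w) \<and>
        (\<forall>j. j + 1 < m \<and> j \<notin> D \<longrightarrow> idx (j + 1) = idx j + 1) \<and>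
        (\<forall>a<m. \<forall>b<m. w ! idx a < w ! idx b \<longleftrightarrow> sig ! a < sig ! b))"

definition avoids :: "nat list \<Rightarrow> gpattern \<Rightarrow> bool" where
  "avoids w p = (\<not> contains w p)"

definition alpha :: "nat \<Rightarrow> gpattern \<Rightarrow> nat" where
  "alpha n p = card {w \<in> perms n. avoids w p}"

definition egf :: "gpattern \<Rightarrow> real fps" where
  "egf p = Abs_fps (\<lambda>n. of_nat (alpha n p) / fact n)"

definition pat12 :: "nat list \<Rightarrow> gpattern" where
  "pat12 sig = ([1, 2] @ map (\<lambda>x. x + 2) sig, {1})"

definition pat21 :: "nat list \<Rightarrow> gpattern" where
  "pat21 sig = ([2, 1] @ map (\<lambda>x. x + 2) sig, {1})"

end

theory Submission imports Defs begin

definition rv :: "nat set \<Rightarrow> nat \<Rightarrow> nat" where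
  "rv C x = sorted_list_of_set C ! (card C - 1 - (LEAST i. sorted_list_of_set C ! i = x))"

lemma rv_idx:
  assumes "finite C" "i < card C"
  shows "rv C (sorted_list_of_set C ! i) = sorted_list_of_set C ! (card C - 1 - i)"
proof -
  let ?L = "sorted_list_of_set C"
  have d: "distinct ?L" and l: "length ?L = card C" using assms by auto
  have "(LEAST j. ?L ! j = ?L ! i) = i"
  proof (rule Least_equality)
    show "?L ! i = ?L ! i" by simp
    fix y assume y: "?L ! y = ?L ! i"
    show "i \<le> y"
    proof (rule ccontr)
      assume "\<not> i \<le> y"
      then have "y < length ?L" "y \<noteq> i" using l assms by auto
      then show False using y d l assms by (simp add: nth_eq_iff_index_eq)
    qed
  qed
  thus ?thesis by (simp add: rv_def)
qed

lemma rv_obtain: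
  assumes "finite C" "x \<in> C"
  obtains i where "i < card C" "x = sorted_list_of_set C ! i"
proof -
  have "x \<in> set (sorted_list_of_set C)" using assms by simp
  then obtain i where "i < length (sorted_list_of_set C)" "x = sorted_list_of_set C ! i"
    by (auto simp: in_set_conv_nth)
  then show ?thesis using that by simp
qed

lemma rv_in: "finite C \<Longrightarrow> x \<in> C \<Longrightarrow> rv C x \<in> C"
proof -
  assume f: "finite C" and x: "x \<in> C"
  obtain i where i: "i < card C" "x = sorted_list_of_set C ! i" using rv_obtain[OF f x] by blast
  have "card C - 1 - i < length (sorted_list_of_set C)" using i by simp
  then have "sorted_list_of_set C ! (card C - 1 - i) \<in> set (sorted_list_of_set C)" by (rule nth_mem)
  then show ?thesis using i f by (simp add: rv_idx)
qed

lemma rv_rv: "finite C \<Longrightarrow> x \<in> C \<Longrightarrow> rv C (rv C x) = x"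
proof -
  assume f: "finite C" and x: "x \<in> C"
  obtain i where i: "i < card C" "x = sorted_list_of_set C ! i" using rv_obtain[OF f x] by blast
  have "card C - 1 - i < card C" using i by auto
  moreover have "card C - 1 - (card C - 1 - i) = i" using i by auto
  ultimately show ?thesis using i f by (simp add: rv_idx)
qed

lemma rv_anti: "finite C \<Longrightarrow> x \<in> C \<Longrightarrow> y \<in> C \<Longrightarrow> x < y \<Longrightarrow> rv C y < rv C x"
proof -
  assume f: "finite C" and x: "x \<in> C" and y: "y \<in> C" and xy: "x < y"
  let ?L = "sorted_list_of_set C"
  have s: "sorted_wrt (<) ?L" using f by (simp add: strict_sorted_list_of_set)
  have l: "length ?L = card C" by simp
  obtain i where i: "i < card C" "x = ?L ! i" using rv_obtain[OF f x] by blast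
  obtain j where j: "j < card C" "y = ?L ! j" using rv_obtain[OF f y] by blast
  have "i < j"
  proof (rule ccontr)
    assume "\<not> i < j"
    then have "j \<le> i" by simp
    then have "?L ! j \<le> ?L ! i" using s i j l
      by (metis le_eq_less_or_eq sorted_wrt_nth_less)
    then show False using xy i j by simp
  qed
  then have "?L ! (card C - 1 - j) < ?L ! (card C - 1 - i)"
    using sorted_wrt_nth_less[OF s, of "card C - 1 - j" "card C - 1 - i"] i j l \<open>i < j\<close> by auto
  then show ?thesis using i j f by (simp add: rv_idx)
qed

lemma rv_less_iff: "finite C \<Longrightarrow> x \<in> C \<Longrightarrow> y \<in> C \<Longrightarrow> rv C x < rv C y \<longleftrightarrow> y < x"
proof -
  assume a: "finite C" "x \<in> C" "y \<in> C"
  consider "x < y" | "x = y" | "y < x" by linarith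
  then show ?thesis
  proof cases
    case 1 then show ?thesis using rv_anti[OF a(1) a(2) a(3)] by auto
  next
    case 2 then show ?thesis by auto
  next
    case 3 then show ?thesis using rv_anti[OF a(1) a(3) a(2)] by auto
  qed
qed

definition occ :: "nat list \<Rightarrow> nat list \<Rightarrow> nat \<Rightarrow> bool" where
  "occ sig w s \<longleftrightarrow> s + length sig \<le> length w \<and>
     (\<forall>a<length sig. \<forall>b<length sig. (w!(s+a) < w!(s+b)) = (sig!a < sig!b))"

definition Lp :: "nat list \<Rightarrow> nat list \<Rightarrow> nat \<Rightarrow> nat \<Rightarrow> bool" where
  "Lp sig w j v \<longleftrightarrow> (\<exists>s. j \<le> s \<and> occ sig w s \<and> (\<forall>a<length sig. v < w!(s+a)))"

definition smallp :: "nat list \<Rightarrow> nat list \<Rightarrow> nat \<Rightarrow> bool" where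
  "smallp sig w p \<longleftrightarrow> Lp sig w (Suc p) (w!p)"

definition cls :: "nat list \<Rightarrow> nat list \<Rightarrow> nat \<Rightarrow> nat set" where
  "cls sig w p = (\<lambda>q. w!q) ` {q. q < length w \<and> smallp sig w q \<and> Lp sig w (Suc q) = Lp sig w (Suc p)}"

definition Phi :: "nat list \<Rightarrow> nat list \<Rightarrow> nat list" where
  "Phi sig w = map (\<lambda>p. if smallp sig w p then rv (cls sig w p) (w!p) else w!p) [0..<length w]"

lemma Lp_mono: "Lp sig w j v \<Longrightarrow> j' \<le> j \<Longrightarrow> v' \<le> v \<Longrightarrow> Lp sig w j' v'"
  unfolding Lp_def by (meson le_trans le_less_trans)

lemma Phi_len[simp]: "length (Phi sig w) = length w"
  by (simp add: Phi_def)

lemma Phi_nth: "p < length w \<Longrightarrow> Phi sig w ! p = (if smallp sig w p then rv (cls sig w p) (w!p) else w!p)"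
  by (simp add: Phi_def)

lemma cls_finite: "finite (cls sig w p)"
  unfolding cls_def by (rule finite_imageI) (rule finite_subset[of _ "{..<length w}"], auto)

lemma cls_mem: "p < length w \<Longrightarrow> smallp sig w p \<Longrightarrow> w!p \<in> cls sig w p"
  unfolding cls_def by auto

lemma cls_sub: "v \<in> cls sig w p \<Longrightarrow> Lp sig w (Suc p) v"
  unfolding cls_def smallp_def by auto

lemma cls_sub_set: "cls sig w p \<subseteq> set w"
  unfolding cls_def by auto

lemma cls_eq: "Lp sig w (Suc q) = Lp sig w (Suc p) \<Longrightarrow> cls sig w q = cls sig w p"
  unfolding cls_def by simp

lemma Phi_small_val: "p < length w \<Longrightarrow> smallp sig w p \<Longrightarrow> Phi sig w ! p \<in> cls sig w p"
  by (simp add: Phi_nth rv_in cls_finite cls_mem)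

lemma Phi_small_Lp: "p < length w \<Longrightarrow> smallp sig w p \<Longrightarrow> Lp sig w (Suc p) (Phi sig w ! p)"
  using Phi_small_val cls_sub by blast

definition mn :: "nat list \<Rightarrow> nat list \<Rightarrow> nat \<Rightarrow> nat" where
  "mn sig w s = Min ((\<lambda>a. w!(s+a)) ` {..<length sig})"

lemma mn_iff: "sig \<noteq> [] \<Longrightarrow> (\<forall>a<length sig. u < w!(s+a)) \<longleftrightarrow> u < mn sig w s"
  unfolding mn_def by (subst Min_gr_iff) auto

lemma mn_le: "a < length sig \<Longrightarrow> mn sig w s \<le> w!(s+a)"
  unfolding mn_def by (rule Min_le) auto

lemma occ_cong:
  assumes "length w' = length w" "\<forall>a<length sig. w'!(s+a) = w!(s+a)"
  shows "occ sig w' s = occ sig w s"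
  using assms unfolding occ_def by auto

lemma Lp_Phi:
  assumes ne: "sig \<noteq> []"
  shows "Lp sig (Phi sig w) j v = Lp sig w j v"
proof
  assume "Lp sig w j v"
  then obtain s0 where s0: "j \<le> s0" "occ sig w s0" "\<forall>a<length sig. v < w!(s0+a)"
    unfolding Lp_def by blast
  define S where "S = {s. j \<le> s \<and> occ sig w s}"
  have finS: "finite S" unfolding S_def occ_def
    by (rule finite_subset[of _ "{..length w}"]) auto
  have s0S: "s0 \<in> S" using s0 by (simp add: S_def)
  define m where "m = Max (mn sig w ` S)"
  have "m \<in> mn sig w ` S" unfolding m_def using finS s0S by (intro Max_in) auto
  then obtain s where sS: "s \<in> S" and ms: "mn sig w s = m" by auto
  have maxm: "\<And>s'. s' \<in> S \<Longrightarrow> mn sig w s' \<le> m" unfolding m_def using finS by auto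
  have "v < mn sig w s0" using s0(3) mn_iff[OF ne] by blast
  then have vm: "v < m" using maxm[OF s0S] by linarith
  have occs: "occ sig w s" and js: "j \<le> s" using sS by (auto simp: S_def)
  have notsmall: "\<not> smallp sig w (s+a)" if a: "a < length sig" for a
  proof
    assume "smallp sig w (s+a)"
    then obtain s'' where s'': "Suc (s+a) \<le> s''" "occ sig w s''" "\<forall>b<length sig. w!(s+a) < w!(s''+b)"
      unfolding smallp_def Lp_def by blast
    have "s'' \<in> S" using s'' js by (auto simp: S_def)
    then have "mn sig w s'' \<le> m" by (rule maxm)
    moreover have "w!(s+a) < mn sig w s''" using s'' mn_iff[OF ne] by blast
    moreover have "m \<le> w!(s+a)" using mn_le[OF a, of w s] ms by simp
    ultimately show False by simp
  qed
  have eq: "\<forall>a<length sig. Phi sig w ! (s+a) = w!(s+a)"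
  proof (intro allI impI)
    fix a assume a: "a < length sig"
    then have "s + a < length w" using occs unfolding occ_def by simp
    then show "Phi sig w ! (s+a) = w!(s+a)" using notsmall[OF a] by (simp add: Phi_nth)
  qed
  have "occ sig (Phi sig w) s" using occ_cong[OF Phi_len eq] occs by simp
  moreover have "\<forall>a<length sig. v < Phi sig w ! (s+a)"
    using eq vm ms mn_iff[OF ne, of v w s] by simp
  ultimately show "Lp sig (Phi sig w) j v" using js unfolding Lp_def by blast
next
  assume "Lp sig (Phi sig w) j v"
  then obtain s where s: "j \<le> s" "occ sig (Phi sig w) s" "\<forall>a<length sig. v < Phi sig w!(s+a)"
    unfolding Lp_def by blast
  show "Lp sig w j v"
  proof (cases "\<exists>a<length sig. smallp sig w (s+a)")
    case True
    then obtain a where a: "a < length sig" "smallp sig w (s+a)" by blast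
    then have "s + a < length w" using s(2) unfolding occ_def by simp
    then have "Lp sig w (Suc (s+a)) (Phi sig w ! (s+a))" using Phi_small_Lp a by blast
    moreover have "j \<le> Suc (s+a)" using s(1) by simp
    moreover have "v \<le> Phi sig w ! (s+a)" using s(3) a(1) by (simp add: less_imp_le)
    ultimately show ?thesis by (rule Lp_mono)
  next
    case False
    have eq: "\<forall>a<length sig. Phi sig w ! (s+a) = w!(s+a)"
    proof (intro allI impI)
      fix a assume a: "a < length sig"
      then have "s + a < length w" using s(2) unfolding occ_def by simp
      then show "Phi sig w ! (s+a) = w!(s+a)" using False a by (simp add: Phi_nth)
    qed
    then show ?thesis using s occ_cong[OF Phi_len eq] unfolding Lp_def by auto
  qed
qed

lemma Lp_Phi_fun: "sig \<noteq> [] \<Longrightarrow> Lp sig (Phi sig w) = Lp sig w"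
  using Lp_Phi by (intro ext) blast

lemma small_Phi:
  assumes ne: "sig \<noteq> []" and p: "p < length w"
  shows "smallp sig (Phi sig w) p = smallp sig w p"
proof (cases "smallp sig w p")
  case True
  then show ?thesis using Phi_small_Lp[OF p True] Lp_Phi[OF ne] unfolding smallp_def by simp
next
  case False
  then show ?thesis using Lp_Phi[OF ne] p by (simp add: Phi_nth smallp_def)
qed

lemma cls_Phi:
  assumes ne: "sig \<noteq> []" and p: "p < length w" and sp: "smallp sig w p"
  shows "cls sig (Phi sig w) p = cls sig w p"
proof -
  define Q where "Q = {q. q < length w \<and> smallp sig w q \<and> Lp sig w (Suc q) = Lp sig w (Suc p)}"
  let ?C = "cls sig w p"
  have qs: "{q. q < length (Phi sig w) \<and> smallp sig (Phi sig w) q \<and>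
      Lp sig (Phi sig w) (Suc q) = Lp sig (Phi sig w) (Suc p)} = Q"
  proof (rule set_eqI)
    fix q
    show "q \<in> {q. q < length (Phi sig w) \<and> smallp sig (Phi sig w) q \<and>
      Lp sig (Phi sig w) (Suc q) = Lp sig (Phi sig w) (Suc p)} \<longleftrightarrow> q \<in> Q"
    proof (cases "q < length w")
      case True
      then show ?thesis unfolding Q_def Lp_Phi_fun[OF ne] using small_Phi[OF ne True] by simp
    next
      case False
      then show ?thesis unfolding Q_def by simp
    qed
  qed
  have c1: "cls sig (Phi sig w) p = (\<lambda>q. Phi sig w ! q) ` Q"
    unfolding cls_def qs ..
  have c2: "(\<lambda>q. Phi sig w ! q) ` Q = rv ?C ` ((\<lambda>q. w!q) ` Q)"
  proof -
    have "\<And>q. q \<in> Q \<Longrightarrow> Phi sig w ! q = rv ?C (w!q)"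
    proof -
      fix q assume "q \<in> Q"
      then have q: "q < length w" "smallp sig w q" "Lp sig w (Suc q) = Lp sig w (Suc p)"
        by (simp_all add: Q_def)
      show "Phi sig w ! q = rv ?C (w!q)" using q(1,2) cls_eq[OF q(3)] by (simp add: Phi_nth)
    qed
    then have "(\<lambda>q. Phi sig w ! q) ` Q = (\<lambda>q. rv ?C (w!q)) ` Q" by (rule image_cong[OF refl])
    then show ?thesis by (simp only: image_image)
  qed
  have c3: "(\<lambda>q. w!q) ` Q = ?C" unfolding Q_def cls_def by simp
  have "rv ?C ` ?C = ?C"
  proof
    show "rv ?C ` ?C \<subseteq> ?C"
    proof
      fix y assume "y \<in> rv ?C ` ?C"
      then obtain x where "x \<in> ?C" "y = rv ?C x" by blast
      then show "y \<in> ?C" using rv_in[OF cls_finite[of sig w p]] by simp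
    qed
    show "?C \<subseteq> rv ?C ` ?C"
    proof
      fix x assume "x \<in> ?C"
      then show "x \<in> rv ?C ` ?C" using rv_rv[OF cls_finite] rv_in[OF cls_finite]
        by (intro image_eqI[of _ _ "rv ?C x"]) auto
    qed
  qed
  then show ?thesis using c1 c2 c3 by simp
qed

lemma Phi_Phi:
  assumes ne: "sig \<noteq> []"
  shows "Phi sig (Phi sig w) = w"
proof (rule nth_equalityI)
  show "length (Phi sig (Phi sig w)) = length w" by simp
  fix p assume "p < length (Phi sig (Phi sig w))"
  then have p: "p < length w" by simp
  show "Phi sig (Phi sig w) ! p = w ! p"
  proof (cases "smallp sig w p")
    case True
    then show ?thesis using p small_Phi[OF ne p] cls_Phi[OF ne p True]
      by (simp add: Phi_nth rv_rv cls_finite cls_mem)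
  next
    case False
    then show ?thesis using p small_Phi[OF ne p] by (simp add: Phi_nth)
  qed
qed

lemma Phi_set: "set (Phi sig w) \<subseteq> set w"
proof
  fix x assume "x \<in> set (Phi sig w)"
  then obtain p where p: "p < length w" "x = Phi sig w ! p" by (auto simp: in_set_conv_nth)
  show "x \<in> set w"
  proof (cases "smallp sig w p")
    case True
    then show ?thesis using p Phi_small_val cls_sub_set by blast
  next
    case False
    then show ?thesis using p by (simp add: Phi_nth)
  qed
qed

lemma Phi_perms:
  assumes ne: "sig \<noteq> []" and w: "w \<in> perms n"
  shows "Phi sig w \<in> perms n"
proof -
  have "set w \<subseteq> set (Phi sig w)" using Phi_set[of sig "Phi sig w"] Phi_Phi[OF ne] by simp
  then have st: "set (Phi sig w) = {1..n}" using Phi_set[of sig w] w by (auto simp: perms_def)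
  have "length w = n" using w distinct_card[of w] by (auto simp: perms_def)
  then have "card (set (Phi sig w)) = length (Phi sig w)" using st by simp
  then have "distinct (Phi sig w)" by (rule card_distinct)
  then show ?thesis using st by (auto simp: perms_def)
qed

lemma key_lemma:
  assumes ne: "sig \<noteq> []" and i: "Suc i < length w"
    and h: "Lp sig w (Suc (Suc i)) (max (Phi sig w ! i) (Phi sig w ! Suc i))"
  shows "Lp sig w (Suc (Suc i)) (max (w!i) (w!Suc i)) \<and>
         (Phi sig w ! i < Phi sig w ! Suc i \<longleftrightarrow> w!Suc i < w!i) \<and>
         (Phi sig w ! Suc i < Phi sig w ! i \<longleftrightarrow> w!i < w!Suc i)"
proof -
  let ?w = "Phi sig w"
  have h1: "Lp sig w (Suc i) (?w!i)" by (rule Lp_mono[OF h]) simp_all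
  have h2: "Lp sig w (Suc (Suc i)) (?w!Suc i)" by (rule Lp_mono[OF h]) simp_all
  have i0: "i < length w" using i by simp
  have si: "smallp sig w i" using small_Phi[OF ne i0] h1 Lp_Phi[OF ne] unfolding smallp_def by simp
  have si1: "smallp sig w (Suc i)" using small_Phi[OF ne i] h2 Lp_Phi[OF ne] unfolding smallp_def by simp
  have key: "Lp sig w (Suc i) = Lp sig w (Suc (Suc i))"
  proof (intro ext iffI)
    fix v assume "Lp sig w (Suc (Suc i)) v"
    then show "Lp sig w (Suc i) v" by (rule Lp_mono) simp_all
  next
    fix v assume "Lp sig w (Suc i) v"
    then obtain s where s: "Suc i \<le> s" "occ sig w s" "\<forall>a<length sig. v < w!(s+a)"
      unfolding Lp_def by blast
    show "Lp sig w (Suc (Suc i)) v"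
    proof (cases "s = Suc i")
      case True
      moreover have "0 < length sig" using ne by simp
      ultimately have "v < w ! Suc i" using s(3) by fastforce
      have "Lp sig w (Suc (Suc i)) (w ! Suc i)" using si1 unfolding smallp_def .
      then show ?thesis by (rule Lp_mono) (simp_all add: \<open>v < w ! Suc i\<close> less_imp_le)
    next
      case False
      then have "Suc (Suc i) \<le> s" using s(1) by simp
      then show ?thesis using s unfolding Lp_def by blast
    qed
  qed
  have ceq: "cls sig w i = cls sig w (Suc i)" by (rule cls_eq[OF key])
  let ?C = "cls sig w (Suc i)"
  have m1: "w!i \<in> ?C" using cls_mem[OF i0 si] ceq by simp
  have m2: "w!Suc i \<in> ?C" using cls_mem[OF i si1] by simp
  have e1: "?w ! i = rv ?C (w!i)" using si i0 ceq by (simp add: Phi_nth)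
  have e2: "?w ! Suc i = rv ?C (w!Suc i)" using si1 i by (simp add: Phi_nth)
  have "Lp sig w (Suc (Suc i)) (w!i)" "Lp sig w (Suc (Suc i)) (w!Suc i)"
    using cls_sub m1 m2 by auto
  then have "Lp sig w (Suc (Suc i)) (max (w!i) (w!Suc i))" by (simp add: max_def)
  then show ?thesis using e1 e2 rv_less_iff[OF cls_finite m1 m2] rv_less_iff[OF cls_finite m2 m1]
    by simp
qed


lemma Pnth:
  assumes "length ab = 2" "a < length sig + 2"
  shows "(ab @ map (\<lambda>x. x+2) sig) ! a = (if a < 2 then ab!a else sig!(a-2) + 2)"
  using assms by (simp add: nth_append)

lemma contains_char:
  assumes ne: "sig \<noteq> []" and ab: "length ab = 2" "ab!0 \<le> 2" "ab!1 \<le> 2"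
    and pos: "\<forall>x\<in>set sig. 1 \<le> x"
  shows "contains w (ab @ map (\<lambda>x. x+2) sig, {1}) \<longleftrightarrow>
    (\<exists>i. Suc i < length w \<and> (w!i < w!Suc i \<longleftrightarrow> ab!0 < ab!1) \<and> (w!Suc i < w!i \<longleftrightarrow> ab!1 < ab!0) \<and>
       Lp sig w (Suc (Suc i)) (max (w!i) (w!Suc i)))"
    (is "?L \<longleftrightarrow> ?R")
proof
  let ?P = "ab @ map (\<lambda>x. x+2) sig"
  let ?k = "length sig"
  have lP: "length ?P = ?k + 2" using ab by simp
  have sigpos: "\<And>a. a < ?k \<Longrightarrow> 1 \<le> sig!a" using pos by simp
  assume ?L
  then obtain idx where
    c1: "\<forall>j. j + 1 < ?k + 2 \<longrightarrow> idx j < idx (j + 1)" and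
    c2: "\<forall>j<?k+2. idx j < length w" and
    c3: "\<forall>j. j + 1 < ?k + 2 \<and> j \<notin> {1} \<longrightarrow> idx (j + 1) = idx j + 1" and
    c4: "\<forall>a<?k+2. \<forall>b<?k+2. w ! idx a < w ! idx b \<longleftrightarrow> ?P ! a < ?P ! b"
    unfolding contains_def Let_def fst_conv snd_conv lP by blast
  define i where "i = idx 0"
  define s where "s = idx 2"
  have i1: "idx 1 = Suc i" using c3[rule_format, of 0] by (simp add: i_def)
  have si: "Suc (Suc i) \<le> s" using c1[rule_format, of 1] i1 ne by (simp add: s_def numeral_2_eq_2)
  have ids: "\<And>a. a < ?k \<Longrightarrow> idx (a+2) = s + a"
  proof -
    fix a show "a < ?k \<Longrightarrow> idx (a+2) = s + a"
    proof (induction a)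
      case 0 then show ?case by (simp add: s_def numeral_2_eq_2)
    next
      case (Suc a)
      then have "idx (a + 2 + 1) = idx (a+2) + 1" using c3[rule_format, of "a+2"] by simp
      then show ?case using Suc by simp
    qed
  qed
  have n1: "Suc i < length w" using c2[rule_format, of 1] i1 by simp
  have sk: "s + ?k \<le> length w"
  proof -
    obtain k' where k': "?k = Suc k'" using ne by (cases sig) auto
    have "idx (k' + 2) < length w" using c2 k' by simp
    moreover have "idx (k' + 2) = s + k'" using ids k' by simp
    ultimately show ?thesis using k' by simp
  qed
  have occs: "occ sig w s" unfolding occ_def
  proof (intro conjI allI impI sk)
    fix a b assume a: "a < ?k" and b: "b < ?k"
    have "w ! idx (a+2) < w ! idx (b+2) \<longleftrightarrow> ?P ! (a+2) < ?P ! (b+2)" using c4 a b by simp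
    then show "(w ! (s + a) < w ! (s + b)) = (sig ! a < sig ! b)"
      using ids[OF a] ids[OF b] Pnth[OF ab(1), of "a+2"] Pnth[OF ab(1), of "b+2"] a b by simp
  qed
  have big: "max (w!i) (w!Suc i) < w!(s+a)" if a: "a < ?k" for a
  proof -
    have "w ! idx 0 < w ! idx (a+2) \<longleftrightarrow> ?P ! 0 < ?P ! (a+2)" using c4 a by simp
    moreover have "?P ! 0 < ?P ! (a+2)" using Pnth[OF ab(1), of "a+2"] Pnth[OF ab(1), of 0] a ab sigpos[OF a] by simp
    moreover have "w ! idx 1 < w ! idx (a+2) \<longleftrightarrow> ?P ! 1 < ?P ! (a+2)" using c4 a by simp
    moreover have "?P ! 1 < ?P ! (a+2)" using Pnth[OF ab(1), of "a+2"] Pnth[OF ab(1), of 1] a ab sigpos[OF a] by simp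
    ultimately show ?thesis using ids[OF a] i1 by (simp add: i_def)
  qed
  have o1: "w!i < w!Suc i \<longleftrightarrow> ab!0 < ab!1"
    using c4[rule_format, of 0 1] i1 Pnth[OF ab(1), of 0] Pnth[OF ab(1), of 1] by (simp add: i_def)
  have o2: "w!Suc i < w!i \<longleftrightarrow> ab!1 < ab!0"
    using c4[rule_format, of 1 0] i1 Pnth[OF ab(1), of 0] Pnth[OF ab(1), of 1] by (simp add: i_def)
  have "Lp sig w (Suc (Suc i)) (max (w!i) (w!Suc i))"
    unfolding Lp_def using si occs big by blast
  then show ?R using n1 o1 o2 by blast
next
  let ?P = "ab @ map (\<lambda>x. x+2) sig"
  let ?k = "length sig"
  have lP: "length ?P = ?k + 2" using ab by simp
  have sigpos: "\<And>a. a < ?k \<Longrightarrow> 1 \<le> sig!a" using pos by simp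
  assume ?R
  then obtain i where n1: "Suc i < length w" and o1: "w!i < w!Suc i \<longleftrightarrow> ab!0 < ab!1"
    and o2: "w!Suc i < w!i \<longleftrightarrow> ab!1 < ab!0" and L: "Lp sig w (Suc (Suc i)) (max (w!i) (w!Suc i))"
    by blast
  then obtain s where si: "Suc (Suc i) \<le> s" and occs: "occ sig w s"
    and big: "\<forall>a<?k. max (w!i) (w!Suc i) < w!(s+a)" unfolding Lp_def by blast
  have sk: "s + ?k \<le> length w" using occs by (simp add: occ_def)
  define idx where "idx j = (if j = 0 then i else if j = 1 then Suc i else s + (j - 2))" for j
  have d1: "\<forall>j. j + 1 < ?k + 2 \<longrightarrow> idx j < idx (j + 1)"
    using si by (auto simp: idx_def)
  have d2: "\<forall>j<?k+2. idx j < length w"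
    using n1 sk by (auto simp: idx_def)
  have d3: "\<forall>j. j + 1 < ?k + 2 \<and> j \<notin> {1} \<longrightarrow> idx (j + 1) = idx j + 1"
    by (auto simp: idx_def)
  have d4: "\<forall>a<?k+2. \<forall>b<?k+2. w ! idx a < w ! idx b \<longleftrightarrow> ?P ! a < ?P ! b"
  proof (intro allI impI)
    fix a b assume a: "a < ?k + 2" and b: "b < ?k + 2"
    have cs: "\<And>x. x < ?k + 2 \<Longrightarrow> x = 0 \<or> x = 1 \<or> (\<exists>x'. x = x' + 2 \<and> x' < ?k)"
      by presburger
    let ?Q = "ab @ map (\<lambda>x. Suc (Suc x)) sig"
    have P0: "?Q ! 0 = ab!0" and P1: "?Q ! Suc 0 = ab!Suc 0" using ab by (simp_all add: nth_append)
    have P2: "\<And>x'. x' < ?k \<Longrightarrow> ?Q ! Suc (Suc x') = Suc (Suc (sig!x'))" using ab by (simp add: nth_append)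
    have I2: "\<And>x'. idx (Suc (Suc x')) = s + x'" by (simp add: idx_def)
    have bigv: "\<And>x'. x' < ?k \<Longrightarrow> w!i < w!(s+x') \<and> w!Suc i < w!(s+x')" using big by auto
    have abv: "\<And>x'. x' < ?k \<Longrightarrow> ab!0 < Suc (Suc (sig!x')) \<and> ab!Suc 0 < Suc (Suc (sig!x'))"
      using ab sigpos by fastforce
    have oc: "\<And>x y. x < ?k \<Longrightarrow> y < ?k \<Longrightarrow> (w ! (s + x) < w ! (s + y)) = (sig ! x < sig ! y)"
      using occs by (simp add: occ_def)
    from cs[OF a] cs[OF b] show "w ! idx a < w ! idx b \<longleftrightarrow> ?P ! a < ?P ! b"
    proof (elim disjE exE conjE)
    qed (simp_all add: idx_def P0 P1 P2 I2 o1 o2 bigv abv oc less_not_sym not_less_iff_gr_or_eq)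
  qed
  show ?L unfolding contains_def Let_def lP fst_conv snd_conv using d1 d2 d3 d4 by blast
qed

lemma avoid_map:
  assumes ne: "sig \<noteq> []" and pos: "\<forall>x\<in>set sig. 1 \<le> x"
    and ab: "length ab = 2" "ab!0 \<le> 2" "ab!1 \<le> 2"
    and cd: "length cd = 2" "cd!0 \<le> 2" "cd!1 \<le> 2"
    and x1: "ab!0 < ab!1 \<longleftrightarrow> cd!1 < cd!0" and x2: "ab!1 < ab!0 \<longleftrightarrow> cd!0 < cd!1"
    and av: "\<not> contains w (cd @ map (\<lambda>x. x+2) sig, {1})"
  shows "\<not> contains (Phi sig w) (ab @ map (\<lambda>x. x+2) sig, {1})"
proof
  assume "contains (Phi sig w) (ab @ map (\<lambda>x. x+2) sig, {1})"
  then obtain i where n1: "Suc i < length w"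
    and o1: "Phi sig w!i < Phi sig w!Suc i \<longleftrightarrow> ab!0 < ab!1"
    and o2: "Phi sig w!Suc i < Phi sig w!i \<longleftrightarrow> ab!1 < ab!0"
    and L: "Lp sig (Phi sig w) (Suc (Suc i)) (max (Phi sig w!i) (Phi sig w!Suc i))"
    using contains_char[OF ne ab pos] by auto
  have L': "Lp sig w (Suc (Suc i)) (max (Phi sig w!i) (Phi sig w!Suc i))"
    using L Lp_Phi[OF ne] by simp
  from key_lemma[OF ne n1 L'] o1 o2 x1 x2
  have "Suc i < length w \<and> (w!i < w!Suc i \<longleftrightarrow> cd!0 < cd!1) \<and> (w!Suc i < w!i \<longleftrightarrow> cd!1 < cd!0) \<and>
       Lp sig w (Suc (Suc i)) (max (w!i) (w!Suc i))" using n1 by blast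
  then have "contains w (cd @ map (\<lambda>x. x+2) sig, {1})"
    using contains_char[OF ne cd pos] by blast
  then show False using av by simp
qed

theorem mainTheorem8:
  fixes sig :: "nat list" and k :: nat
  assumes "k \<ge> 1" and "sig \<in> perms k"
  shows "egf (pat12 sig) = egf (pat21 sig)"
proof -
  have ne: "sig \<noteq> []" using assms by (auto simp: perms_def)
  have pos: "\<forall>x\<in>set sig. 1 \<le> x" using assms by (auto simp: perms_def)
  have "alpha n (pat12 sig) = alpha n (pat21 sig)" for n
  proof -
    let ?A = "{w \<in> perms n. avoids w (pat12 sig)}"
    let ?B = "{w \<in> perms n. avoids w (pat21 sig)}"
    have "bij_betw (Phi sig) ?A ?B"
    proof (rule bij_betw_byWitness[where f' = "Phi sig"])
      show "\<forall>a\<in>?A. Phi sig (Phi sig a) = a" using Phi_Phi[OF ne] by blast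
      show "\<forall>a\<in>?B. Phi sig (Phi sig a) = a" using Phi_Phi[OF ne] by blast
      show "Phi sig ` ?A \<subseteq> ?B"
        using Phi_perms[OF ne] avoid_map[OF ne pos, of "[2,1]" "[1,2]"]
        unfolding avoids_def pat12_def pat21_def by auto
      show "Phi sig ` ?B \<subseteq> ?A"
        using Phi_perms[OF ne] avoid_map[OF ne pos, of "[1,2]" "[2,1]"]
        unfolding avoids_def pat12_def pat21_def by auto
    qed
    then show ?thesis unfolding alpha_def by (rule bij_betw_same_card)
  qed
  then show ?thesis unfolding egf_def by simp
qed

end
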